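(* Consider a standard Nash equilibrium problem (NEP) with $N$ players in which player $\nu$ solves $\min_{x^\nu}\theta_\nu(x)$ subject to $c^\nu(x^\nu)\le 0$, where $\theta_\nu:\mathbb{R}^n\to\mathbb{R}$ and $c^\nu:\mathbb{R}^{n_\nu}\to\mathbb{R}^{r_\nu}$ are continuously differentiable (so each constraint function $c^\nu$ depends only on player $\nu$'s own variables). Let $c=(c^1,\ldots,c^N):\mathbb{R}^n\to\mathbb{R}^r$ be the concatenated constraint map and let $\bar x\in\mathbb{R}^n$. Then: (a) If $\bar x$ is feasible (i.e. $c(\bar x)\le 0$), then GNEP-CPLD holds in $\bar x$ if and only if $c$ satisfies (classical) CPLD in $\bar x$. (b) GNEP-EMFCQ holds in $\bar x$ if and only if $c$ satisfies (classical) EMFCQ in $\bar x$.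
   Context: Variables: $x=(x^1,\ldots,x^N)\in\mathbb{R}^n$ with $x^\nu\in\mathbb{R}^{n_\nu}$, $n=n_1+\cdots+n_N$, $r=r_1+\cdots+r_N$; one writes $x=(x^\nu,x^{-\nu})$. For a differentiable $f$, $\nabla f$ denotes the transposed Jacobian and $\nabla_{x^\nu} f$ the submatrix corresponding to the components $x^\nu$. Vectors $v_1,\dots,v_k$ are positively linearly dependent if $\sum_i\lambda_i v_i=0$ has a nontrivial solution with all $\lambda_i\ge 0$. CPLD$_\nu$ at a point $x$ with $c^\nu(x)\le0$: whenever the partial gradients $\nabla_{x^\nu}c_i^\nu(x)$, $i\in I$, are positively linearly dependent for some $I\subset\{i: c_i^\nu(x)=0\}$, the partial gradients $\nabla_{x^\nu}c_i^\nu(y)$, $i\in I$, are linearly dependent for all $y$ in a neighbourhood of $x$. GNEP-CPLD holds at $x$ if CPLD$_\nu$ holds at $x$ for every $\nu$. EMFCQ$_\nu$ at a point $x$ (not necessarily feasible): there is $d^\nu\in\mathbb{R}^{n_\nu}$ with $\nabla_{x^\nu}c_i^\nu(x)^Td^\nu<0$ for every $i$ with $c_i^\nu(x)\ge0$. GNEP-EMFCQ holds at $x$ if EMFCQ$_\nu$ holds at $x$ for every $\nu$. Classical CPLD for $c$ at a feasible $x$: whenever $\nabla c_i(x)$, $i\in I$, are positively linearly dependent for some subset $I$ of active indices $\{i:c_i(x)=0\}$, the full gradients $\nabla c_i(y)$, $i\in I$, are linearly dependent for all $y$ near $x$. Classical EMFCQ for $c$ at $x$: there is $d\in\mathbb{R}^n$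 with $\nabla c_i(x)^Td<0$ for every $i$ with $c_i(x)\ge 0$. *)

theory Defs
  imports "HOL-Analysis.Analysis"
begin

text \<open>Players are the elements of a finite type 'p;
  blk j is the player owning coordinate j, so x^\<nu> = (x$j)_{blk j = \<nu>}.
  Player \<nu> has constraints c \<nu> i, i < r \<nu>, with gradient function gc \<nu> i.\<close>

definition lin_dep_fam :: "('i \<Rightarrow> 'a::real_vector) \<Rightarrow> 'i set \<Rightarrow> bool" where
  "lin_dep_fam v I \<longleftrightarrow> (\<exists>l. (\<exists>k\<in>I. l k \<noteq> 0) \<and> (\<Sum>k\<in>I. l k *\<^sub>R v k) = 0)"

definition pos_lin_dep_fam :: "('i \<Rightarrow> 'a::real_vector) \<Rightarrow> 'i set \<Rightarrow> bool" where
  "pos_lin_dep_fam v I \<longleftrightarrow>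
     (\<exists>l. (\<forall>k\<in>I. l k \<ge> 0) \<and> (\<exists>k\<in>I. l k \<noteq> 0) \<and> (\<Sum>k\<in>I. l k *\<^sub>R v k) = 0)"

text \<open>Partial gradient w.r.t. the block of player \<nu>, embedded in real^'n
  (zero outside the block).\<close>
definition partial_grad :: "('n \<Rightarrow> 'p) \<Rightarrow> 'p \<Rightarrow> real^'n \<Rightarrow> real^'n" where
  "partial_grad blk \<nu> g = (\<chi> j. if blk j = \<nu> then g $ j else 0)"

definition CPLD :: "'k set \<Rightarrow> ('k \<Rightarrow> real^'n \<Rightarrow> real) \<Rightarrow> ('k \<Rightarrow> real^'n \<Rightarrow> real^'n)
                    \<Rightarrow> real^'n \<Rightarrow> bool" where
  "CPLD K g G x \<longleftrightarrow>
    (\<forall>I. I \<subseteq> {k\<in>K. g k x = 0} \<longrightarrow> pos_lin_dep_fam (\<lambda>k. G k x) I \<longrightarrow>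
        (\<exists>e>0. \<forall>y\<in>ball x e. lin_dep_fam (\<lambda>k. G k y) I))"

definition EMFCQ :: "'k set \<Rightarrow> ('k \<Rightarrow> real^'n \<Rightarrow> real) \<Rightarrow> ('k \<Rightarrow> real^'n \<Rightarrow> real^'n)
                    \<Rightarrow> real^'n \<Rightarrow> bool" where
  "EMFCQ K g G x \<longleftrightarrow> (\<exists>d. \<forall>k\<in>K. g k x \<ge> 0 \<longrightarrow> G k x \<bullet> d < 0)"

definition CPLD_player :: "('n \<Rightarrow> 'p) \<Rightarrow> ('p \<Rightarrow> nat) \<Rightarrow> ('p \<Rightarrow> nat \<Rightarrow> real^'n \<Rightarrow> real)
      \<Rightarrow> ('p \<Rightarrow> nat \<Rightarrow> real^'n \<Rightarrow> real^'n) \<Rightarrow> 'p \<Rightarrow> real^'n \<Rightarrow> bool" where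
  "CPLD_player blk r c gc \<nu> x \<longleftrightarrow>
    (\<forall>I. I \<subseteq> {i. i < r \<nu> \<and> c \<nu> i x = 0} \<longrightarrow>
        pos_lin_dep_fam (\<lambda>i. partial_grad blk \<nu> (gc \<nu> i x)) I \<longrightarrow>
        (\<exists>e>0. \<forall>y\<in>ball x e. lin_dep_fam (\<lambda>i. partial_grad blk \<nu> (gc \<nu> i y)) I))"

definition GNEP_CPLD :: "('n \<Rightarrow> 'p) \<Rightarrow> ('p \<Rightarrow> nat) \<Rightarrow> ('p \<Rightarrow> nat \<Rightarrow> real^'n \<Rightarrow> real)
      \<Rightarrow> ('p \<Rightarrow> nat \<Rightarrow> real^'n \<Rightarrow> real^'n) \<Rightarrow> real^'n \<Rightarrow> bool" where
  "GNEP_CPLD blk r c gc x \<longleftrightarrow> (\<forall>\<nu>. CPLD_player blk r c gc \<nu> x)"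

definition EMFCQ_player :: "('n \<Rightarrow> 'p) \<Rightarrow> ('p \<Rightarrow> nat) \<Rightarrow> ('p \<Rightarrow> nat \<Rightarrow> real^'n \<Rightarrow> real)
      \<Rightarrow> ('p \<Rightarrow> nat \<Rightarrow> real^'n \<Rightarrow> real^'n) \<Rightarrow> 'p \<Rightarrow> real^'n \<Rightarrow> bool" where
  "EMFCQ_player blk r c gc \<nu> x \<longleftrightarrow>
    (\<exists>d. (\<forall>j. blk j \<noteq> \<nu> \<longrightarrow> d $ j = 0) \<and>
         (\<forall>i<r \<nu>. c \<nu> i x \<ge> 0 \<longrightarrow> partial_grad blk \<nu> (gc \<nu> i x) \<bullet> d < 0))"

definition GNEP_EMFCQ :: "('n \<Rightarrow> 'p) \<Rightarrow> ('p \<Rightarrow> nat) \<Rightarrow> ('p \<Rightarrow> nat \<Rightarrow> real^'n \<Rightarrow> real)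
      \<Rightarrow> ('p \<Rightarrow> nat \<Rightarrow> real^'n \<Rightarrow> real^'n) \<Rightarrow> real^'n \<Rightarrow> bool" where
  "GNEP_EMFCQ blk r c gc x \<longleftrightarrow> (\<forall>\<nu>. EMFCQ_player blk r c gc \<nu> x)"

end

theory Submission
  imports Defs
begin

lemma pg_linear: "bounded_linear (partial_grad blk \<nu>)"
  unfolding partial_grad_def
  apply (rule linear_conv_bounded_linear[THEN iffD1])
  apply (rule linearI) by (auto simp: vec_eq_iff)

lemma pg_add: "partial_grad blk \<nu> (a + b) = partial_grad blk \<nu> a + partial_grad blk \<nu> b"
  by (simp add: partial_grad_def vec_eq_iff)
lemma pg_scale: "partial_grad blk \<nu> (t *\<^sub>R a) = t *\<^sub>R partial_grad blk \<nu> a"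
  by (simp add: partial_grad_def vec_eq_iff)
lemma pg_zero: "partial_grad blk \<nu> 0 = 0"
  by (simp add: partial_grad_def vec_eq_iff)

lemma pg_sum: "partial_grad blk \<nu> (\<Sum>k\<in>I. a k *\<^sub>R v k) = (\<Sum>k\<in>I. a k *\<^sub>R partial_grad blk \<nu> (v k))"
proof (cases "finite I")
  case True
  then show ?thesis by (induction I rule: finite_induct) (simp_all add: pg_add pg_scale pg_zero)
next
  case False
  then show ?thesis by (simp add: pg_zero)
qed

lemma sum_pair: "(\<Sum>k\<in>Pair \<nu> ` J. f k) = (\<Sum>i\<in>J. f (\<nu>, i))"
  by (rule sum.reindex_cong[where l = "Pair \<nu>"]) (auto simp: inj_on_def)

lemma grad_supp:
  fixes c :: "real^'n::finite \<Rightarrow> real" and blk :: "'n \<Rightarrow> 'p"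
  assumes d: "\<And>x. (c has_derivative (\<lambda>h. g x \<bullet> h)) (at x)"
    and own: "\<And>x y. (\<forall>j. blk j = \<nu> \<longrightarrow> x $ j = y $ j) \<Longrightarrow> c x = c y"
    and j: "blk j \<noteq> \<nu>"
  shows "g x $ j = 0"
proof -
  let ?P = "partial_grad blk \<nu>"
  have P: "(?P has_derivative ?P) (at x)" by (rule bounded_linear_imp_has_derivative[OF pg_linear])
  have "((c \<circ> ?P) has_derivative ((\<lambda>h. g (?P x) \<bullet> h) \<circ> ?P)) (at x)"
    by (rule diff_chain_at[OF P d])
  moreover have "c \<circ> ?P = c"
  proof
    fix y
    show "(c \<circ> ?P) y = c y" unfolding comp_apply
      by (rule own) (simp add: partial_grad_def)
  qed
  ultimately have "(c has_derivative ((\<lambda>h. g (?P x) \<bullet> h) \<circ> ?P)) (at x)" by simp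
  then have eq: "(\<lambda>h. g x \<bullet> h) = ((\<lambda>h. g (?P x) \<bullet> h) \<circ> ?P)"
    by (rule has_derivative_unique[OF d])
  have "g x \<bullet> axis j 1 = g (?P x) \<bullet> ?P (axis j 1)"
    using fun_cong[OF eq, of "axis j 1"] by simp
  moreover have "?P (axis j 1) = 0" using j by (auto simp: partial_grad_def vec_eq_iff axis_def)
  ultimately show ?thesis by (simp add: inner_axis)
qed

theorem theorem2p5:
  fixes blk :: "'n::finite \<Rightarrow> 'p::finite"
    and r :: "'p \<Rightarrow> nat"
    and \<theta> :: "'p \<Rightarrow> real^'n \<Rightarrow> real"
    and g\<theta> :: "'p \<Rightarrow> real^'n \<Rightarrow> real^'n"
    and c :: "'p \<Rightarrow> nat \<Rightarrow> real^'n \<Rightarrow> real"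
    and gc :: "'p \<Rightarrow> nat \<Rightarrow> real^'n \<Rightarrow> real^'n"
    and xbar :: "real^'n"
  assumes theta_C1: "\<And>\<nu> x. (\<theta> \<nu> has_derivative (\<lambda>h. g\<theta> \<nu> x \<bullet> h)) (at x)"
    and theta_cont: "\<And>\<nu>. continuous_on UNIV (g\<theta> \<nu>)"
    and c_C1: "\<And>\<nu> i x. i < r \<nu> \<Longrightarrow> (c \<nu> i has_derivative (\<lambda>h. gc \<nu> i x \<bullet> h)) (at x)"
    and c_cont: "\<And>\<nu> i. i < r \<nu> \<Longrightarrow> continuous_on UNIV (gc \<nu> i)"
    and c_own: "\<And>\<nu> i x y. i < r \<nu> \<Longrightarrow> (\<forall>j. blk j = \<nu> \<longrightarrow> x $ j = y $ j) \<Longrightarrow> c \<nu> i x = c \<nu> i y"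
  shows "((\<forall>\<nu> i. i < r \<nu> \<longrightarrow> c \<nu> i xbar \<le> 0) \<longrightarrow>
           (GNEP_CPLD blk r c gc xbar \<longleftrightarrow>
            CPLD {(\<nu>, i). i < r \<nu>} (\<lambda>(\<nu>, i). c \<nu> i) (\<lambda>(\<nu>, i). gc \<nu> i) xbar))
       \<and> (GNEP_EMFCQ blk r c gc xbar \<longleftrightarrow>
            EMFCQ {(\<nu>, i). i < r \<nu>} (\<lambda>(\<nu>, i). c \<nu> i) (\<lambda>(\<nu>, i). gc \<nu> i) xbar)"
proof -
  have supp: "gc \<nu> i x $ j = 0" if "i < r \<nu>" "blk j \<noteq> \<nu>" for \<nu> i x j
    by (rule grad_supp[where c="c \<nu> i" and g="gc \<nu> i" and blk=blk and \<nu>=\<nu>, OF c_C1[OF that(1)] c_own[OF that(1)] that(2)])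
  have pg_self: "partial_grad blk \<nu> (gc \<nu> i x) = gc \<nu> i x" if "i < r \<nu>" for \<nu> i x
    using supp[OF that] by (auto simp: partial_grad_def vec_eq_iff)
  have pg_other: "partial_grad blk \<nu> (gc \<mu> i x) = 0" if "i < r \<mu>" "\<mu> \<noteq> \<nu>" for \<nu> \<mu> i x
    using supp[OF that(1)] that(2) by (auto simp: partial_grad_def vec_eq_iff)
  have inner_eq: "gc \<nu> i x \<bullet> d = gc \<nu> i x \<bullet> d'" if "i < r \<nu>" "\<And>j. blk j = \<nu> \<Longrightarrow> d $ j = d' $ j"
    for \<nu> i x d d'
    unfolding inner_vec_def
    by (rule sum.cong) (use supp[OF that(1)] that(2) in auto)
  let ?K = "{(\<nu>, i). i < r \<nu>}"
  let ?G = "\<lambda>(\<nu>, i). gc \<nu> i"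
  have finK: "finite ?K"
  proof -
    have "?K = Sigma UNIV (\<lambda>\<nu>. {..<r \<nu>})" by auto
    then show ?thesis by simp
  qed
  have emf: "GNEP_EMFCQ blk r c gc xbar \<longleftrightarrow> EMFCQ ?K (\<lambda>(\<nu>, i). c \<nu> i) ?G xbar"
  proof
    assume "GNEP_EMFCQ blk r c gc xbar"
    then have ex: "\<forall>\<nu>. \<exists>d. (\<forall>j. blk j \<noteq> \<nu> \<longrightarrow> d $ j = 0) \<and>
         (\<forall>i<r \<nu>. c \<nu> i xbar \<ge> 0 \<longrightarrow> partial_grad blk \<nu> (gc \<nu> i xbar) \<bullet> d < 0)"
      unfolding GNEP_EMFCQ_def EMFCQ_player_def by blast
    obtain dd where dd: "\<And>\<nu>. (\<forall>j. blk j \<noteq> \<nu> \<longrightarrow> dd \<nu> $ j = 0) \<and>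
         (\<forall>i<r \<nu>. c \<nu> i xbar \<ge> 0 \<longrightarrow> partial_grad blk \<nu> (gc \<nu> i xbar) \<bullet> dd \<nu> < 0)"
      using choice[OF ex] by blast
    define D where "D = (\<chi> j. dd (blk j) $ j)"
    show "EMFCQ ?K (\<lambda>(\<nu>, i). c \<nu> i) ?G xbar"
      unfolding EMFCQ_def
    proof (intro exI ballI impI)
      fix k assume k: "k \<in> ?K" and "0 \<le> (case k of (\<nu>, i) \<Rightarrow> c \<nu> i) xbar"
      then obtain \<nu> i where ki: "k = (\<nu>, i)" "i < r \<nu>" "0 \<le> c \<nu> i xbar" by auto
      have "gc \<nu> i xbar \<bullet> D = gc \<nu> i xbar \<bullet> dd \<nu>"
        by (rule inner_eq) (use ki in \<open>auto simp: D_def\<close>)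
      then show "(case k of (\<nu>, i) \<Rightarrow> gc \<nu> i) xbar \<bullet> D < 0"
        using dd[of \<nu>] ki pg_self by auto
    qed
  next
    assume "EMFCQ ?K (\<lambda>(\<nu>, i). c \<nu> i) ?G xbar"
    then obtain d where d: "\<And>\<nu> i. i < r \<nu> \<Longrightarrow> c \<nu> i xbar \<ge> 0 \<Longrightarrow> gc \<nu> i xbar \<bullet> d < 0"
      unfolding EMFCQ_def by fastforce
    show "GNEP_EMFCQ blk r c gc xbar"
      unfolding GNEP_EMFCQ_def EMFCQ_player_def
    proof (intro allI)
      fix \<nu>
      show "\<exists>d'. (\<forall>j. blk j \<noteq> \<nu> \<longrightarrow> d' $ j = 0) \<and>
         (\<forall>i<r \<nu>. c \<nu> i xbar \<ge> 0 \<longrightarrow> partial_grad blk \<nu> (gc \<nu> i xbar) \<bullet> d' < 0)"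
      proof (intro exI[of _ "partial_grad blk \<nu> d"] conjI allI impI)
      fix j show "blk j \<noteq> \<nu> \<Longrightarrow> partial_grad blk \<nu> d $ j = 0" by (simp add: partial_grad_def)
      fix i assume "i < r \<nu>" "0 \<le> c \<nu> i xbar"
      moreover have "gc \<nu> i xbar \<bullet> partial_grad blk \<nu> d = gc \<nu> i xbar \<bullet> d"
        by (rule inner_eq) (use \<open>i < r \<nu>\<close> in \<open>auto simp: partial_grad_def\<close>)
      ultimately show "partial_grad blk \<nu> (gc \<nu> i xbar) \<bullet> partial_grad blk \<nu> d < 0"
        using d pg_self by simp
      qed
    qed
  qed
  have cpld: "GNEP_CPLD blk r c gc xbar \<longleftrightarrow> CPLD ?K (\<lambda>(\<nu>, i). c \<nu> i) ?G xbar"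
  proof
    assume G: "GNEP_CPLD blk r c gc xbar"
    show "CPLD ?K (\<lambda>(\<nu>, i). c \<nu> i) ?G xbar"
      unfolding CPLD_def
    proof (intro allI impI)
      fix I assume I: "I \<subseteq> {k \<in> ?K. (\<lambda>(\<nu>, i). c \<nu> i) k xbar = 0}"
        and pl: "pos_lin_dep_fam (\<lambda>k. ?G k xbar) I"
      from pl obtain l k0 where l0: "\<forall>k\<in>I. l k \<ge> 0" and k0: "k0 \<in> I" "l k0 \<noteq> 0"
        and ls: "(\<Sum>k\<in>I. l k *\<^sub>R ?G k xbar) = 0"
        unfolding pos_lin_dep_fam_def by blast
      obtain \<nu>0 i0 where k0e: "k0 = (\<nu>0, i0)" by (cases k0)
      define J where "J = {i. (\<nu>0, i) \<in> I}"
      have finI: "finite I" by (rule finite_subset[OF _ finK]) (use I in auto)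
      have IK: "i < r \<nu> \<and> c \<nu> i xbar = 0" if "(\<nu>, i) \<in> I" for \<nu> i using I that by auto
      have IJ: "{k\<in>I. fst k = \<nu>0} = Pair \<nu>0 ` J" unfolding J_def by force
      have sumJ: "(\<Sum>k\<in>I. if fst k = \<nu>0 then f k else 0) = (\<Sum>i\<in>J. f (\<nu>0, i))" for f :: "'p \<times> nat \<Rightarrow> real^'n"
      proof -
        have "(\<Sum>k\<in>I. if fst k = \<nu>0 then f k else 0) = (\<Sum>k\<in>{k\<in>I. fst k = \<nu>0}. f k)"
          by (rule sum.inter_filter[OF finI, symmetric])
        also have "\<dots> = (\<Sum>i\<in>J. f (\<nu>0, i))" unfolding IJ by (rule sum_pair)
        finally show ?thesis .
      qed
      have "partial_grad blk \<nu>0 (\<Sum>k\<in>I. l k *\<^sub>R ?G k xbar) = 0" using ls pg_zero by simp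
      hence "(\<Sum>k\<in>I. l k *\<^sub>R partial_grad blk \<nu>0 (?G k xbar)) = 0" by (simp add: pg_sum)
      moreover have "(\<Sum>k\<in>I. l k *\<^sub>R partial_grad blk \<nu>0 (?G k xbar))
          = (\<Sum>k\<in>I. if fst k = \<nu>0 then l k *\<^sub>R ?G k xbar else 0)"
      proof (rule sum.cong)
        fix k assume "k \<in> I"
        then obtain \<nu> i where ke: "k = (\<nu>, i)" "(\<nu>, i) \<in> I" by (cases k) auto
        then have "i < r \<nu>" using IK by blast
        then show "l k *\<^sub>R partial_grad blk \<nu>0 (?G k xbar) = (if fst k = \<nu>0 then l k *\<^sub>R ?G k xbar else 0)"
          using ke pg_self pg_other by auto
      qed simp
      ultimately have J0: "(\<Sum>i\<in>J. l (\<nu>0, i) *\<^sub>R gc \<nu>0 i xbar) = 0" using sumJ by simp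
      have pgJ: "(\<Sum>i\<in>J. f i *\<^sub>R partial_grad blk \<nu>0 (gc \<nu>0 i y)) = (\<Sum>i\<in>J. f i *\<^sub>R gc \<nu>0 i y)" for f y
        by (rule sum.cong) (use IK pg_self in \<open>auto simp: J_def\<close>)
      have pJ: "pos_lin_dep_fam (\<lambda>i. partial_grad blk \<nu>0 (gc \<nu>0 i xbar)) J"
        unfolding pos_lin_dep_fam_def
      proof (intro exI[of _ "\<lambda>i. l (\<nu>0, i)"] conjI)
        show "\<forall>i\<in>J. l (\<nu>0, i) \<ge> 0" using l0 J_def by auto
        show "\<exists>i\<in>J. l (\<nu>0, i) \<noteq> 0" using k0 k0e J_def by auto
        show "(\<Sum>i\<in>J. l (\<nu>0, i) *\<^sub>R partial_grad blk \<nu>0 (gc \<nu>0 i xbar)) = 0" using J0 pgJ by simp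
      qed
      have JA: "J \<subseteq> {i. i < r \<nu>0 \<and> c \<nu>0 i xbar = 0}" using IK J_def by auto
      from G have "CPLD_player blk r c gc \<nu>0 xbar" unfolding GNEP_CPLD_def by blast
      then obtain e where e: "e > 0"
        and ey: "\<forall>y\<in>ball xbar e. lin_dep_fam (\<lambda>i. partial_grad blk \<nu>0 (gc \<nu>0 i y)) J"
        unfolding CPLD_player_def using JA pJ by blast
      show "\<exists>e>0. \<forall>y\<in>ball xbar e. lin_dep_fam (\<lambda>k. ?G k y) I"
      proof (intro exI[of _ e] conjI ballI)
        show "e > 0" by (rule e)
        fix y assume y: "y \<in> ball xbar e"
        then obtain m i1 where m1: "i1 \<in> J" "m i1 \<noteq> 0"
          and ms: "(\<Sum>i\<in>J. m i *\<^sub>R partial_grad blk \<nu>0 (gc \<nu>0 i y)) = 0"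
          using ey unfolding lin_dep_fam_def by blast
        have ms': "(\<Sum>i\<in>J. m i *\<^sub>R gc \<nu>0 i y) = 0" using ms pgJ by simp
        show "lin_dep_fam (\<lambda>k. ?G k y) I"
          unfolding lin_dep_fam_def
        proof (intro exI[of _ "\<lambda>k. if fst k = \<nu>0 then m (snd k) else 0"] conjI)
          show "\<exists>k\<in>I. (if fst k = \<nu>0 then m (snd k) else 0) \<noteq> 0"
            using m1 J_def by (intro bexI[of _ "(\<nu>0, i1)"]) auto
          have "(\<Sum>k\<in>I. (if fst k = \<nu>0 then m (snd k) else 0) *\<^sub>R ?G k y)
              = (\<Sum>k\<in>I. if fst k = \<nu>0 then m (snd k) *\<^sub>R ?G k y else 0)"
            by (rule sum.cong) auto
          also have "\<dots> = (\<Sum>i\<in>J. m i *\<^sub>R gc \<nu>0 i y)" by (simp add: sumJ)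
          finally show "(\<Sum>k\<in>I. (if fst k = \<nu>0 then m (snd k) else 0) *\<^sub>R ?G k y) = 0"
            using ms' by simp
        qed
      qed
    qed
  next
    assume C: "CPLD ?K (\<lambda>(\<nu>, i). c \<nu> i) ?G xbar"
    show "GNEP_CPLD blk r c gc xbar"
      unfolding GNEP_CPLD_def CPLD_player_def
    proof (intro allI impI)
      fix \<nu> J assume JA: "J \<subseteq> {i. i < r \<nu> \<and> c \<nu> i xbar = 0}"
        and pJ: "pos_lin_dep_fam (\<lambda>i. partial_grad blk \<nu> (gc \<nu> i xbar)) J"
      have Jr: "i < r \<nu>" if "i \<in> J" for i using JA that by auto
      have pgJ: "(\<Sum>i\<in>J. f i *\<^sub>R partial_grad blk \<nu> (gc \<nu> i y)) = (\<Sum>i\<in>J. f i *\<^sub>R gc \<nu> i y)" for f y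
        by (rule sum.cong) (auto simp: pg_self Jr)
      from pJ obtain m i0 where m0: "\<forall>i\<in>J. m i \<ge> 0" "i0 \<in> J" "m i0 \<noteq> 0"
        and ms: "(\<Sum>i\<in>J. m i *\<^sub>R gc \<nu> i xbar) = 0"
        unfolding pos_lin_dep_fam_def using pgJ by metis
      have IA: "Pair \<nu> ` J \<subseteq> {k \<in> ?K. (\<lambda>(\<nu>, i). c \<nu> i) k xbar = 0}" using JA by auto
      have "pos_lin_dep_fam (\<lambda>k. ?G k xbar) (Pair \<nu> ` J)"
        unfolding pos_lin_dep_fam_def
      proof (intro exI[of _ "\<lambda>k. m (snd k)"] conjI)
        show "\<forall>k\<in>Pair \<nu> ` J. m (snd k) \<ge> 0" using m0 by auto
        show "\<exists>k\<in>Pair \<nu> ` J. m (snd k) \<noteq> 0" using m0 by auto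
        show "(\<Sum>k\<in>Pair \<nu> ` J. m (snd k) *\<^sub>R ?G k xbar) = 0" using ms by (simp add: sum_pair)
      qed
      with C IA obtain e where e: "e > 0"
        and ey: "\<forall>y\<in>ball xbar e. lin_dep_fam (\<lambda>k. ?G k y) (Pair \<nu> ` J)"
        unfolding CPLD_def by blast
      show "\<exists>e>0. \<forall>y\<in>ball xbar e. lin_dep_fam (\<lambda>i. partial_grad blk \<nu> (gc \<nu> i y)) J"
      proof (intro exI[of _ e] conjI ballI)
        show "e > 0" by (rule e)
        fix y assume "y \<in> ball xbar e"
        then obtain l k1 where k1: "k1 \<in> Pair \<nu> ` J" "l k1 \<noteq> 0"
          and ls: "(\<Sum>k\<in>Pair \<nu> ` J. l k *\<^sub>R ?G k y) = 0"
          using ey unfolding lin_dep_fam_def by blast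
        show "lin_dep_fam (\<lambda>i. partial_grad blk \<nu> (gc \<nu> i y)) J"
          unfolding lin_dep_fam_def
        proof (intro exI[of _ "\<lambda>i. l (\<nu>, i)"] conjI)
          show "\<exists>i\<in>J. l (\<nu>, i) \<noteq> 0" using k1 by auto
          show "(\<Sum>i\<in>J. l (\<nu>, i) *\<^sub>R partial_grad blk \<nu> (gc \<nu> i y)) = 0"
            using ls pgJ by (simp add: sum_pair)
        qed
      qed
    qed
  qed
  show ?thesis using emf cpld by blast
qed

end
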